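(* Let $p(x,y)$ be a real polynomial with $p(0,0)=0$, $\nabla p(0,0)=(0,0)$, $\dim\operatorname{Co}N_p=2$, such that for every $A\in\mathbb{N}^2$ the main $A$-quasi-homogeneous form of $p$ is nonnegative on $\mathbb{R}^2$. Let $A=(A_1,A_2)\in\mathcal{A}_p$ with $g_2^A(u_0)\neq0$ for all $u_0\in U_p(A)$, and let $x^{\chi_1}y^{\eta_1}$ be the monomial of the main term of $\varphi_2^A$. Then the following are equivalent: (i) for all $(x,y)$ with $\varphi_1^A(x,y)=0$, $x\neq0$, $y\neq0$ one has $\varphi_2^A(x,y)>0$; (ii) for every $u_0\in U_p(A)$ the system $x\neq0$, $y\neq0$, $x^{-A_2}y^{A_1}=u_0$, $x^{\chi_1}y^{\eta_1}g_2^A(u_0)<0$ has no real solution.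
   Context: $\mathbb{N}=\{1,2,\dots\}$; $\mathbb{N}_0^2$ is the set of $(A_1,A_2)\in\mathbb{N}^2$ with $\gcd(A_1,A_2)=1$. $N_p$ is the support of $p$ and $\operatorname{Co}N_p$ its convex hull. For $A\in\mathbb{N}^2$ the main $A$-quasi-homogeneous form of $p$ is the sum of the terms of $p$ whose exponent vectors $k$ minimize $\langle A,k\rangle$ over $N_p$. For $A\in\mathbb{N}_0^2$, with $B_1^A<B_2^A<\dots$ the distinct values of $\langle A,k\rangle$ on $N_p$, $\varphi_i^A$ is the sum of terms of $p$ with $\langle A,k\rangle=B_i^A$. For such a form $\sum_i c_ix^{\gamma_i}y^{\delta_i}$ ($c_i\ne0$, $\gamma_1>\gamma_2>\dots$), its main term is $c_1x^{\gamma_1}y^{\delta_1}$ and its characteristic polynomial is $\sum_ic_iu^{(\gamma_1-\gamma_i)/A_2}$; $g_1^A,g_2^A$ are those of $\varphi_1^A,\varphi_2^A$. $\mathcal{A}_p$ is the set of $A\in\mathbb{N}_0^2$ such that $\varphi_1^A$ has at least three terms, $g_1^A\ge0$ on $\mathbb{R}$, and $g_1^A$ has a real root; $U_p(A)$ is the set of real roots of $g_1^A$. *)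

theory Defs
  imports "HOL-Analysis.Analysis" "HOL-Computational_Algebra.Polynomial"
begin

text \<open>A real polynomial in two variables x, y is represented by its coefficient
  function c :: nat \<times> nat \<Rightarrow> real (c (i,j) is the coefficient of x^i y^j)
  with finite support.\<close>

definition supp2 :: "(nat \<times> nat \<Rightarrow> real) \<Rightarrow> (nat \<times> nat) set" where
  "supp2 c = {k. c k \<noteq> 0}"

definition peval :: "(nat \<times> nat \<Rightarrow> real) \<Rightarrow> real \<Rightarrow> real \<Rightarrow> real" where
  "peval c x y = (\<Sum>k\<in>supp2 c. c k * x ^ fst k * y ^ snd k)"

definition wdeg :: "nat \<times> nat \<Rightarrow> nat \<times> nat \<Rightarrow> nat" where
  "wdeg A k = fst A * fst k + snd A * snd k"

definition Bval :: "(nat \<times> nat \<Rightarrow> real) \<Rightarrow> nat \<times> nat \<Rightarrow> nat \<Rightarrow> nat" where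
  "Bval c A i = sorted_list_of_set (wdeg A ` supp2 c) ! (i - 1)"

text \<open>phi c A i = sum of the terms of p with <A,k> = B_i (i \<ge> 1).\<close>
definition phi :: "(nat \<times> nat \<Rightarrow> real) \<Rightarrow> nat \<times> nat \<Rightarrow> nat \<Rightarrow> (nat \<times> nat \<Rightarrow> real)" where
  "phi c A i = (\<lambda>k. if k \<in> supp2 c \<and> wdeg A k = Bval c A i then c k else 0)"

definition main_form :: "(nat \<times> nat \<Rightarrow> real) \<Rightarrow> nat \<times> nat \<Rightarrow> (nat \<times> nat \<Rightarrow> real)" where
  "main_form c A = (\<lambda>k. if k \<in> supp2 c \<and> wdeg A k = Min (wdeg A ` supp2 c) then c k else 0)"

definition char_poly :: "(nat \<times> nat \<Rightarrow> real) \<Rightarrow> nat \<times> nat \<Rightarrow> real poly" where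
  "char_poly f A = (\<Sum>k\<in>supp2 f. monom (f k) ((Max (fst ` supp2 f) - fst k) div snd A))"

definition in_N0 :: "nat \<times> nat \<Rightarrow> bool" where
  "in_N0 A \<longleftrightarrow> fst A > 0 \<and> snd A > 0 \<and> coprime (fst A) (snd A)"

definition in_Ap :: "(nat \<times> nat \<Rightarrow> real) \<Rightarrow> nat \<times> nat \<Rightarrow> bool" where
  "in_Ap c A \<longleftrightarrow> in_N0 A \<and> card (supp2 (phi c A 1)) \<ge> 3
     \<and> (\<forall>u. poly (char_poly (phi c A 1) A) u \<ge> 0)
     \<and> (\<exists>u. poly (char_poly (phi c A 1) A) u = 0)"

definition Up :: "(nat \<times> nat \<Rightarrow> real) \<Rightarrow> nat \<times> nat \<Rightarrow> real set" where
  "Up c A = {u. poly (char_poly (phi c A 1) A) u = 0}"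

end

theory Submission imports Defs begin
lemma key:
  fixes f :: "nat \<times> nat \<Rightarrow> real"
  assumes fin: "finite (supp2 f)" and A: "0<A1" "0<A2" "coprime A1 A2"
    and w: "\<forall>k\<in>supp2 f. wdeg (A1,A2) k = B"
    and Mm: "(M,m) \<in> supp2 f" and Mmax: "\<forall>k\<in>supp2 f. fst k \<le> M"
    and x: "x \<noteq> 0"
  shows "peval f x y = x^M * y^m * poly (char_poly f (A1,A2)) (x powi (-int A2) * y^A1)"
proof -
  have MaxM: "Max (fst ` supp2 f) = M"
    using fin Mm Mmax by (intro Max_eqI) force+
  let ?u = "x powi (-int A2) * y^A1"
  have termeq: "f k * x ^ fst k * y ^ snd k = x^M * y^m * (f k * ?u ^ ((M - fst k) div A2))"
    if k: "k \<in> supp2 f" for k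
  proof -
    obtain k1 k2 where kk: "k = (k1,k2)" by fastforce
    have le: "k1 \<le> M" using Mmax k kk by auto
    have eq: "A1*k1 + A2*k2 = A1*M + A2*m" using w k Mm kk unfolding wdeg_def by (metis fst_conv snd_conv)
    have eq2: "A1*(M-k1) = A2*(k2-m)" and kge: "k2 \<ge> m"
    proof -
      have "A2*k2 = A2*m + A1*(M-k1)" using eq le by (simp add: diff_mult_distrib2)
      then have "A2*m \<le> A2*k2" by linarith
      then show "k2 \<ge> m" using A by simp
      show "A1*(M-k1) = A2*(k2-m)" using \<open>A2*k2 = A2*m + A1*(M-k1)\<close> by (simp add: diff_mult_distrib2)
    qed
    have "A2 dvd A1*(M-k1)" using eq2 by simp
    then have "A2 dvd (M-k1)" using A(3) by (metis coprime_commute coprime_dvd_mult_right_iff)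
    then obtain t where t: "M - k1 = A2*t" by blast
    have tdiv: "(M - fst k) div A2 = t" using t kk A by simp
    have k2: "k2 = m + A1*t" using eq2 t A kge by (metis add_diff_inverse_nat mult.left_commute mult_cancel_left not_less not_less_eq_eq not_gr0 nat_mult_eq_cancel1 le_add_diff_inverse)
    have M: "M = k1 + A2*t" using t le by simp
    have xa: "x^A2 \<noteq> 0" using x by simp
    have "?u ^ t = inverse (x^A2) ^ t * y^(A1*t)"
      by (simp add: power_int_minus power_mult_distrib power_mult)
    then have "x^M * y^m * ?u ^ t = x^k1 * y^m * y^(A1*t) * ((x^A2)^t * inverse (x^A2) ^ t)"
      unfolding M by (simp add: power_add power_mult algebra_simps)
    also have "(x^A2)^t * inverse (x^A2) ^ t = 1" using xa
      by (metis power_mult_distrib right_inverse power_one)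
    finally have h: "x^M * y^m * ?u ^ t = x^k1 * y^k2" using k2 by (simp add: power_add)
    show ?thesis unfolding tdiv using h kk by (metis fst_conv snd_conv mult.assoc mult.left_commute)
  qed
  have "peval f x y = (\<Sum>k\<in>supp2 f. x^M * y^m * (f k * ?u ^ ((M - fst k) div A2)))"
    unfolding peval_def using termeq by (rule sum.cong[OF refl])
  also have "\<dots> = x^M * y^m * poly (char_poly f (A1,A2)) ?u"
    unfolding char_poly_def MaxM by (simp add: poly_sum poly_monom sum_distrib_left)
  finally show ?thesis .
qed

lemma supp_phi: "supp2 (phi c A i) = {k \<in> supp2 c. wdeg A k = Bval c A i}"
  unfolding supp2_def phi_def by auto

theorem corollary1:
  fixes c :: "nat \<times> nat \<Rightarrow> real" and A1 A2 \<chi>1 \<eta>1 :: nat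
  assumes fin: "finite (supp2 c)"
    and p0: "peval c 0 0 = 0"
    and grad: "((\<lambda>z. peval c (fst z) (snd z)) has_derivative (\<lambda>_. 0)) (at (0, 0))"
    and dim2: "aff_dim (convex hull ((\<lambda>k. (real (fst k), real (snd k))) ` supp2 c)) = 2"
    and mainnn: "\<forall>A. fst A > 0 \<and> snd A > 0 \<longrightarrow> (\<forall>x y. peval (main_form c A) x y \<ge> 0)"
    and AAp: "in_Ap c (A1, A2)"
    and g2: "\<forall>u0\<in>Up c (A1, A2). poly (char_poly (phi c (A1, A2) 2) (A1, A2)) u0 \<noteq> 0"
    and mt1: "(\<chi>1, \<eta>1) \<in> supp2 (phi c (A1, A2) 2)"
    and mt2: "\<forall>k\<in>supp2 (phi c (A1, A2) 2). fst k \<le> \<chi>1"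
  shows "(\<forall>x y. peval (phi c (A1, A2) 1) x y = 0 \<and> x \<noteq> 0 \<and> y \<noteq> 0
              \<longrightarrow> peval (phi c (A1, A2) 2) x y > 0)
    \<longleftrightarrow> (\<forall>u0\<in>Up c (A1, A2). \<not> (\<exists>x y::real. x \<noteq> 0 \<and> y \<noteq> 0 \<and>
              x powi (- int A2) * y ^ A1 = u0 \<and>
              x ^ \<chi>1 * y ^ \<eta>1 * poly (char_poly (phi c (A1, A2) 2) (A1, A2)) u0 < 0))"
proof -
  have A: "0 < A1" "0 < A2" "coprime A1 A2" using AAp unfolding in_Ap_def in_N0_def by auto
  let ?f1 = "phi c (A1,A2) 1" and ?f2 = "phi c (A1,A2) 2"
  let ?g1 = "char_poly ?f1 (A1,A2)" and ?g2 = "char_poly ?f2 (A1,A2)"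
  have fin1: "finite (supp2 ?f1)" and fin2: "finite (supp2 ?f2)"
    using fin unfolding supp_phi by auto
  have w1: "\<forall>k\<in>supp2 ?f1. wdeg (A1,A2) k = Bval c (A1,A2) 1"
   and w2: "\<forall>k\<in>supp2 ?f2. wdeg (A1,A2) k = Bval c (A1,A2) 2"
    unfolding supp_phi by auto
  have ne1: "supp2 ?f1 \<noteq> {}" using AAp unfolding in_Ap_def by auto
  have "Max (fst ` supp2 ?f1) \<in> fst ` supp2 ?f1" using fin1 ne1 by (intro Max_in) auto
  then obtain M m where Mm: "(M,m) \<in> supp2 ?f1" and MM: "M = Max (fst ` supp2 ?f1)" by force
  have Mmax: "\<forall>k\<in>supp2 ?f1. fst k \<le> M" using fin1 MM by auto
  have e1: "peval ?f1 x y = x^M * y^m * poly ?g1 (x powi (-int A2) * y^A1)" if "x \<noteq> 0" for x y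
    by (rule key[OF fin1 A w1 Mm Mmax that])
  have e2: "peval ?f2 x y = x^\<chi>1 * y^\<eta>1 * poly ?g2 (x powi (-int A2) * y^A1)" if "x \<noteq> 0" for x y
    by (rule key[OF fin2 A w2 mt1 mt2 that])
  have Up: "u \<in> Up c (A1,A2) \<longleftrightarrow> poly ?g1 u = 0" for u unfolding Up_def by simp
  show ?thesis
  proof
    assume H: "\<forall>x y. peval ?f1 x y = 0 \<and> x \<noteq> 0 \<and> y \<noteq> 0 \<longrightarrow> peval ?f2 x y > 0"
    show "\<forall>u0\<in>Up c (A1, A2). \<not> (\<exists>x y::real. x \<noteq> 0 \<and> y \<noteq> 0 \<and>
              x powi (- int A2) * y ^ A1 = u0 \<and> x ^ \<chi>1 * y ^ \<eta>1 * poly ?g2 u0 < 0)"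
    proof (intro ballI notI)
      fix u0 assume u0: "u0 \<in> Up c (A1,A2)"
      assume "\<exists>x y::real. x \<noteq> 0 \<and> y \<noteq> 0 \<and>
              x powi (- int A2) * y ^ A1 = u0 \<and> x ^ \<chi>1 * y ^ \<eta>1 * poly ?g2 u0 < 0"
      then obtain x y :: real where xy: "x \<noteq> 0" "y \<noteq> 0" "x powi (- int A2) * y ^ A1 = u0"
        "x ^ \<chi>1 * y ^ \<eta>1 * poly ?g2 u0 < 0" by blast
      have "peval ?f1 x y = 0" using e1[OF xy(1), of y] xy(3) u0 Up by simp
      then have "peval ?f2 x y > 0" using H xy by blast
      then show False using e2[OF xy(1), of y] xy by simp
    qed
  next
    assume H: "\<forall>u0\<in>Up c (A1, A2). \<not> (\<exists>x y::real. x \<noteq> 0 \<and> y \<noteq> 0 \<and>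
              x powi (- int A2) * y ^ A1 = u0 \<and> x ^ \<chi>1 * y ^ \<eta>1 * poly ?g2 u0 < 0)"
    show "\<forall>x y. peval ?f1 x y = 0 \<and> x \<noteq> 0 \<and> y \<noteq> 0 \<longrightarrow> peval ?f2 x y > 0"
    proof (intro allI impI)
      fix x y :: real assume xy: "peval ?f1 x y = 0 \<and> x \<noteq> 0 \<and> y \<noteq> 0"
      define u where "u = x powi (- int A2) * y ^ A1"
      have "poly ?g1 u = 0" using e1[of x y] xy unfolding u_def by force
      then have uU: "u \<in> Up c (A1,A2)" using Up by simp
      then have nz: "poly ?g2 u \<noteq> 0" using g2 by blast
      have "\<not> (x ^ \<chi>1 * y ^ \<eta>1 * poly ?g2 u < 0)" using H uU xy unfolding u_def by blast
      moreover have "x ^ \<chi>1 * y ^ \<eta>1 * poly ?g2 u \<noteq> 0" using nz xy by simp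
      ultimately show "peval ?f2 x y > 0" using e2[of x y] xy unfolding u_def by linarith
    qed
  qed
qed

end
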